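(* Let $\hat\Pi_t=\hat\sigma_t(M_t)$, $t=0,\dots,T$, be an approximate information state with parameters $\epsilon_t,\delta_t,\lambda_t$, and suppose that for each $t$ and each $\hat\pi_t\in[[\hat\Pi_t]]$ the infimum defining $\hat V_t(\hat\pi_t)$ is attained; let $\hat g_t^*(\hat\pi_t)\in\arg\min_{u_t\in[[U_t]]}\hat Q_t(\hat\pi_t,u_t)$ and $g_t^{\mathrm{ap}}(m_t):=\hat g_t^*(\hat\sigma_t(m_t))$. Define $\Lambda_{T+1}\equiv0$ and, for $t=T,\dots,0$, $m_t\in[[M_t]]$, $u_t\in[[U_t]]$, $$\Theta_t(m_t,u_t):=\max\Big\{\sup_{c\in[[C_t|m_t,u_t]]}c,\ \sup_{m_{t+1}\in[[M_{t+1}|m_t,u_t]]}\Lambda_{t+1}(m_{t+1})\Big\},\qquad \Lambda_t(m_t):=\Theta_t(m_t,g_t^{\mathrm{ap}}(m_t)).$$ For $t=0,\dots,T$ let $L_{\hat V_{t+1}}$ be a Lipschitz constant of $\hat V_{t+1}$ (with $L_{\hat V_{T+1}}=0$), and let $\alpha_{T+1}:=0$, $\alpha_t:=\max(\epsilon_t,\alpha_{t+1}+L_{\hat V_{t+1}}\delta_t)$. Then for all $t=0,\dots,T$, $m_t\in[[M_t]]$, $u_t\in[[U_t]]$: $$|Q_t(m_t,u_t)-\Theta_t(m_t,u_t)|\le2\alpha_t,\qquad |V_t(m_t)-\Lambda_t(m_t)|\le2\alpha_t.$$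
   Context: Uncertain variables: fix a sample space $\Omega$; an uncertain variable with values in a set $\mathcal{X}$ is a map $X:\Omega\to\mathcal{X}$, with marginal range $[[X]]:=\{X(\omega):\omega\in\Omega\}$; uncertain variables are independent if their joint range is the product of their marginal ranges. Hausdorff distance: for nonempty subsets $\mathcal{A},\mathcal{B}$ of a metric space $(\mathcal{S},\eta)$, $\mathcal{H}(\mathcal{A},\mathcal{B}):=\max\{\sup_{a\in\mathcal{A}}\inf_{b\in\mathcal{B}}\eta(a,b),\sup_{b\in\mathcal{B}}\inf_{a\in\mathcal{A}}\eta(a,b)\}$. A function $f:\mathcal{X}\to\mathcal{Y}$ between metric spaces is $L$-invertible if there is $L_{f^{-1}}\ge0$ with $\mathcal{H}(f^{-1}(y^1),f^{-1}(y^2))\le L_{f^{-1}}\eta(y^1,y^2)$ for all $y^1,y^2$. System: horizon $T\in\mathbb{N}$. For $t=0,\dots,T$ there are independent disturbances $W_t\in\mathcal{W}_t$, actions $U_t\in\mathcal{U}_t$ taking values in a given set $[[U_t]]\subseteq\mathcal{U}_t$, observations $Y_0=h_0(W_0)$, $Y_{t+1}=h_{t+1}(W_{0:t},U_{0:t})$, and costs $C_t=d_t(W_{0:t},U_{0:t})\in\mathcal{C}_t\subset\mathbb{R}_{\ge0}$. Standing assumptions: $\mathcal{U}_t,\mathcal{W}_t,\mathcal{Y}_t$ are bounded subsets of a metric space $(\mathcal{S},\eta)$ (product spaces carry a metric also denoted $\eta$), the $\mathcal{C}_t$ are bounded subsets of $\mathbb{R}_{\ge0}$, each $h_t$ is Lipschitz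 and $L$-invertible, each $d_t$ is Lipschitz. The memory is $M_t=(Y_{0:t},U_{0:t-1})\in\mathcal{M}_t:=\prod_{\ell=0}^t\mathcal{Y}_\ell\times\prod_{\ell=0}^{t-1}\mathcal{U}_\ell$. Strategy-independent ranges: for $m_t=(y_{0:t},u_{0:t-1})$ let $\mathcal{W}(m_t)$ be the set of $w_{0:t}\in\prod_{\ell=0}^t[[W_\ell]]$ with $y_0=h_0(w_0)$ and $y_\ell=h_\ell(w_{0:\ell-1},u_{0:\ell-1})$ for $\ell=1,\dots,t$. Let $[[M_t]]$ be the set of such $m_t$ with $u_\ell\in[[U_\ell]]$ and $\mathcal{W}(m_t)\neq\emptyset$. For $m_t\in[[M_t]]$, $u_t\in[[U_t]]$: $[[C_t|m_t,u_t]]:=\{d_t(w_{0:t},u_{0:t}):w_{0:t}\in\mathcal{W}(m_t)\}$, $[[Y_{t+1}|m_t,u_t]]:=\{h_{t+1}(w_{0:t},u_{0:t}):w_{0:t}\in\mathcal{W}(m_t)\}$, $[[M_{t+1}|m_t,u_t]]:=\{(m_t,u_t,y_{t+1}):y_{t+1}\in[[Y_{t+1}|m_t,u_t]]\}$. For functions $\hat\sigma_t$ on $\mathcal{M}_t$ and $\hat\Pi_t=\hat\sigma_t(M_t)$: $[[\hat\Pi_t]]:=\hat\sigma_t([[M_t]])$, $[[M_t|\hat\pi_t]]:=\{m_t\in[[M_t]]:\hat\sigma_t(m_t)=\hat\pi_t\}$, $[[\hat\Pi_{t+1}|m_t,u_t]]:=\{\hat\sigma_{t+1}(m_{t+1}):m_{t+1}\in[[M_{t+1}|m_t,u_t]]\}$,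 and for $Z\in\{C_t,Y_{t+1},\hat\Pi_{t+1}\}$, $[[Z|\hat\pi_t,u_t]]:=\bigcup_{m_t\in[[M_t|\hat\pi_t]]}[[Z|m_t,u_t]]$. Memory-based DP: $V_{T+1}\equiv0$ and for $t=T,\dots,0$, $Q_t(m_t,u_t):=\max\{\sup_{c\in[[C_t|m_t,u_t]]}c,\ \sup_{m_{t+1}\in[[M_{t+1}|m_t,u_t]]}V_{t+1}(m_{t+1})\}$, $V_t(m_t):=\inf_{u_t\in[[U_t]]}Q_t(m_t,u_t)$. Approximate information state: $\hat\Pi_t=\hat\sigma_t(M_t)$ with $L$-invertible $\hat\sigma_t:\mathcal{M}_t\to\hat{\mathcal{P}}_t$, $\hat{\mathcal{P}}_t$ bounded with metric $\eta$, such that for each $t=0,\dots,T$ there are $\epsilon_t,\delta_t,\lambda_t\ge0$ with, for all $m_t\in[[M_t]]$, $u_t\in[[U_t]]$: (1) $|\sup_{c\in[[C_t|m_t,u_t]]}c-\sup_{c\in[[C_t|\hat\sigma_t(m_t),u_t]]}c|\le\epsilon_t$; (2) $\mathcal{H}([[\hat\Pi_{t+1}|m_t,u_t]],[[\hat\Pi_{t+1}|\hat\sigma_t(m_t),u_t]])\le\delta_t$; (3) for all $\hat\pi_t^1,\hat\pi_t^2\in[[\hat\Pi_t]]$, $\mathcal{H}([[\hat\Pi_{t+1}|\hat\pi_t^1,u_t]],[[\hat\Pi_{t+1}|\hat\pi_t^2,u_t]])\le\lambda_t\,\eta(\hat\pi_t^1,\hat\pi_t^2)$. Approximate DP: $\hat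 V_{T+1}\equiv0$ and for $t=T,\dots,0$, $\hat\pi_t\in[[\hat\Pi_t]]$, $u_t\in[[U_t]]$: $\hat Q_t(\hat\pi_t,u_t):=\max\{\sup_{c\in[[C_t|\hat\pi_t,u_t]]}c,\ \sup_{\hat\pi_{t+1}\in[[\hat\Pi_{t+1}|\hat\pi_t,u_t]]}\hat V_{t+1}(\hat\pi_{t+1})\}$, $\hat V_t(\hat\pi_t):=\inf_{u_t\in[[U_t]]}\hat Q_t(\hat\pi_t,u_t)$. (Each $\hat V_t$ is Lipschitz on $[[\hat\Pi_t]]$.) *)

theory Defs
  imports "HOL-Analysis.Analysis"
begin

text \<open>A memory m_t = (y_{0:t}, u_{0:t-1}) is represented as a pair of lists.
  Disturbance/action sequences w_{0:t}, u_{0:t} are lists as well.\<close>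

type_synonym 'a mem = "'a list \<times> 'a list"

definition ldist :: "('a::metric_space) list \<Rightarrow> 'a list \<Rightarrow> real" where
  "ldist xs ys = foldr max (map (\<lambda>(x, y). dist x y) (zip xs ys)) 0"

definition pdist :: "('a::metric_space) mem \<Rightarrow> 'a mem \<Rightarrow> real" where
  "pdist p q = max (ldist (fst p) (fst q)) (ldist (snd p) (snd q))"

definition hdist :: "('b \<Rightarrow> 'b \<Rightarrow> real) \<Rightarrow> 'b set \<Rightarrow> 'b set \<Rightarrow> real" where
  "hdist eta A B = max (SUP a\<in>A. INF b\<in>B. eta a b) (SUP b\<in>B. INF a\<in>A. eta a b)"

definition lipschitz_wrt :: "('b \<Rightarrow> 'b \<Rightarrow> real) \<Rightarrow> ('c \<Rightarrow> 'c \<Rightarrow> real) \<Rightarrow> 'b set \<Rightarrow> ('b \<Rightarrow> 'c) \<Rightarrow> bool" where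
  "lipschitz_wrt etaX etaY D f \<longleftrightarrow> (\<exists>L\<ge>0. \<forall>x\<in>D. \<forall>x'\<in>D. etaY (f x) (f x') \<le> L * etaX x x')"

definition L_invertible :: "('b \<Rightarrow> 'b \<Rightarrow> real) \<Rightarrow> ('c \<Rightarrow> 'c \<Rightarrow> real) \<Rightarrow> 'b set \<Rightarrow> ('b \<Rightarrow> 'c) \<Rightarrow> bool" where
  "L_invertible etaX etaY D f \<longleftrightarrow>
     (\<exists>L\<ge>0. \<forall>y1\<in>f ` D. \<forall>y2\<in>f ` D.
        hdist etaX {x\<in>D. f x = y1} {x\<in>D. f x = y2} \<le> L * etaY y1 y2)"

definition ProdL :: "(nat \<Rightarrow> 'a set) \<Rightarrow> nat \<Rightarrow> 'a list set" where
  "ProdL S n = {xs. length xs = n \<and> (\<forall>i<n. xs ! i \<in> S i)}"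

definition hdom :: "(nat \<Rightarrow> 'a set) \<Rightarrow> (nat \<Rightarrow> 'a set) \<Rightarrow> nat \<Rightarrow> 'a mem set" where
  "hdom Wsp Usp t = (if t = 0 then ProdL Wsp 1 \<times> {[]} else ProdL Wsp t \<times> ProdL Usp t)"

definition Msp :: "(nat \<Rightarrow> 'a set) \<Rightarrow> (nat \<Rightarrow> 'a set) \<Rightarrow> nat \<Rightarrow> 'a mem set" where
  "Msp Ysp Usp t = ProdL Ysp (Suc t) \<times> ProdL Usp t"

text \<open>W(m_t). Here h 0 is applied to ([w_0], []) and h l to (w_{0:l-1}, u_{0:l-1}).\<close>
definition Wm :: "(nat \<Rightarrow> 'a mem \<Rightarrow> 'a) \<Rightarrow> (nat \<Rightarrow> 'a set) \<Rightarrow> nat \<Rightarrow> 'a mem \<Rightarrow> 'a list set" where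
  "Wm h Wr t m = (case m of (ys, us) \<Rightarrow>
     {ws \<in> ProdL Wr (Suc t). ys ! 0 = h 0 ([ws ! 0], []) \<and>
        (\<forall>l\<in>{1..t}. ys ! l = h l (take l ws, take l us))})"

definition Mset :: "(nat \<Rightarrow> 'a mem \<Rightarrow> 'a) \<Rightarrow> (nat \<Rightarrow> 'a set) \<Rightarrow> (nat \<Rightarrow> 'a set) \<Rightarrow> nat \<Rightarrow> 'a mem set" where
  "Mset h Wr Ur t = {(ys, us). length ys = Suc t \<and> us \<in> ProdL Ur t \<and> Wm h Wr t (ys, us) \<noteq> {}}"

definition Cset :: "(nat \<Rightarrow> 'a mem \<Rightarrow> 'a) \<Rightarrow> (nat \<Rightarrow> 'a set) \<Rightarrow> (nat \<Rightarrow> 'a mem \<Rightarrow> real) \<Rightarrow> nat \<Rightarrow> 'a mem \<Rightarrow> 'a \<Rightarrow> real set" where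
  "Cset h Wr d t m u = (\<lambda>ws. d t (ws, snd m @ [u])) ` Wm h Wr t m"

definition Yset :: "(nat \<Rightarrow> 'a mem \<Rightarrow> 'a) \<Rightarrow> (nat \<Rightarrow> 'a set) \<Rightarrow> nat \<Rightarrow> 'a mem \<Rightarrow> 'a \<Rightarrow> 'a set" where
  "Yset h Wr t m u = (\<lambda>ws. h (Suc t) (ws, snd m @ [u])) ` Wm h Wr t m"

text \<open>[[M_{t+1} | m_t, u_t]]; (m_t, u_t, y_{t+1}) is (y_{0:t} @ [y_{t+1}], u_{0:t-1} @ [u_t]).\<close>
definition Mnext :: "(nat \<Rightarrow> 'a mem \<Rightarrow> 'a) \<Rightarrow> (nat \<Rightarrow> 'a set) \<Rightarrow> nat \<Rightarrow> 'a mem \<Rightarrow> 'a \<Rightarrow> 'a mem set" where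
  "Mnext h Wr t m u = (\<lambda>y. (fst m @ [y], snd m @ [u])) ` Yset h Wr t m u"

definition PiR :: "(nat \<Rightarrow> 'a mem \<Rightarrow> 'a) \<Rightarrow> (nat \<Rightarrow> 'a set) \<Rightarrow> (nat \<Rightarrow> 'a set) \<Rightarrow> (nat \<Rightarrow> 'a mem \<Rightarrow> 'p) \<Rightarrow> nat \<Rightarrow> 'p set" where
  "PiR h Wr Ur \<sigma> t = \<sigma> t ` Mset h Wr Ur t"

definition MofPi :: "(nat \<Rightarrow> 'a mem \<Rightarrow> 'a) \<Rightarrow> (nat \<Rightarrow> 'a set) \<Rightarrow> (nat \<Rightarrow> 'a set) \<Rightarrow> (nat \<Rightarrow> 'a mem \<Rightarrow> 'p) \<Rightarrow> nat \<Rightarrow> 'p \<Rightarrow> 'a mem set" where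
  "MofPi h Wr Ur \<sigma> t p = {m \<in> Mset h Wr Ur t. \<sigma> t m = p}"

definition PiNext :: "(nat \<Rightarrow> 'a mem \<Rightarrow> 'a) \<Rightarrow> (nat \<Rightarrow> 'a set) \<Rightarrow> (nat \<Rightarrow> 'a mem \<Rightarrow> 'p) \<Rightarrow> nat \<Rightarrow> 'a mem \<Rightarrow> 'a \<Rightarrow> 'p set" where
  "PiNext h Wr \<sigma> t m u = \<sigma> (Suc t) ` Mnext h Wr t m u"

definition CsetP :: "(nat \<Rightarrow> 'a mem \<Rightarrow> 'a) \<Rightarrow> (nat \<Rightarrow> 'a set) \<Rightarrow> (nat \<Rightarrow> 'a set) \<Rightarrow> (nat \<Rightarrow> 'a mem \<Rightarrow> real) \<Rightarrow> (nat \<Rightarrow> 'a mem \<Rightarrow> 'p) \<Rightarrow> nat \<Rightarrow> 'p \<Rightarrow> 'a \<Rightarrow> real set" where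
  "CsetP h Wr Ur d \<sigma> t p u = (\<Union>m\<in>MofPi h Wr Ur \<sigma> t p. Cset h Wr d t m u)"

definition PiNextP :: "(nat \<Rightarrow> 'a mem \<Rightarrow> 'a) \<Rightarrow> (nat \<Rightarrow> 'a set) \<Rightarrow> (nat \<Rightarrow> 'a set) \<Rightarrow> (nat \<Rightarrow> 'a mem \<Rightarrow> 'p) \<Rightarrow> nat \<Rightarrow> 'p \<Rightarrow> 'a \<Rightarrow> 'p set" where
  "PiNextP h Wr Ur \<sigma> t p u = (\<Union>m\<in>MofPi h Wr Ur \<sigma> t p. PiNext h Wr \<sigma> t m u)"

end

theory Submission
  imports Defs "HOL-Analysis.Analysis"
begin

lemma max_close:
  fixes a b a' b' e :: real
  assumes "\<bar>a - a'\<bar> \<le> e" and "\<bar>b - b'\<bar> \<le> e"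
  shows "\<bar>max a b - max a' b'\<bar> \<le> e"
  using assms by (auto simp: max_def abs_le_iff)

lemma sup_close:
  fixes f g :: "'b \<Rightarrow> real"
  assumes X: "X \<noteq> {}" and cl: "\<forall>x\<in>X. \<bar>f x - g x\<bar> \<le> e" and bg: "bdd_above (g ` X)"
  shows "\<bar>Sup (f ` X) - Sup (g ` X)\<bar> \<le> e"
proof -
  obtain B where B: "\<forall>x\<in>X. g x \<le> B" using bg by (auto simp: bdd_above_def)
  have "f x \<le> B + e" if x: "x \<in> X" for x
  proof -
    have "\<bar>f x - g x\<bar> \<le> e" "g x \<le> B" using cl B x by auto
    thus ?thesis by (simp add: abs_le_iff)
  qed
  hence bf: "bdd_above (f ` X)" by (auto simp: bdd_above_def)
  have 1: "Sup (f ` X) \<le> Sup (g ` X) + e"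
  proof (rule cSUP_least[OF X])
    fix x assume x: "x \<in> X"
    have "g x \<le> Sup (g ` X)" using cSUP_upper[OF x bg] .
    moreover have "\<bar>f x - g x\<bar> \<le> e" using cl x by auto
    ultimately show "f x \<le> Sup (g ` X) + e" by (simp add: abs_le_iff)
  qed
  have 2: "Sup (g ` X) \<le> Sup (f ` X) + e"
  proof (rule cSUP_least[OF X])
    fix x assume x: "x \<in> X"
    have "f x \<le> Sup (f ` X)" using cSUP_upper[OF x bf] .
    moreover have "\<bar>f x - g x\<bar> \<le> e" using cl x by auto
    ultimately show "g x \<le> Sup (f ` X) + e" by (simp add: abs_le_iff)
  qed
  show ?thesis using 1 2 by linarith
qed

lemma inf_close:
  fixes f g :: "'b \<Rightarrow> real"
  assumes z: "z \<in> X" and zmin: "\<forall>x\<in>X. g z \<le> g x" and cl: "\<forall>x\<in>X. \<bar>f x - g x\<bar> \<le> e"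
  shows "\<bar>Inf (f ` X) - Inf (g ` X)\<bar> \<le> e"
proof -
  have X: "X \<noteq> {}" using z by auto
  have gi: "Inf (g ` X) = g z" by (rule cInf_eq_minimum) (use z zmin in auto)
  have lo: "g z - e \<le> f x" if x: "x \<in> X" for x
  proof -
    have "\<bar>f x - g x\<bar> \<le> e" "g z \<le> g x" using cl zmin x by auto
    thus ?thesis by (simp add: abs_le_iff)
  qed
  hence bf: "bdd_below (f ` X)" by (auto simp: bdd_below_def)
  have 1: "Inf (f ` X) \<le> g z + e"
  proof -
    have "\<bar>f z - g z\<bar> \<le> e" using cl z by auto
    thus ?thesis using cINF_lower[OF bf z] by (simp add: abs_le_iff)
  qed
  have 2: "g z - e \<le> Inf (f ` X)"
    by (rule cINF_greatest[OF X]) (rule lo)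
  show ?thesis using 1 2 gi by linarith
qed

lemma haus_one:
  fixes f :: "'p::metric_space \<Rightarrow> real"
  assumes A: "A \<noteq> {}" and B: "B \<noteq> {}" and AS: "A \<subseteq> S" and BS: "B \<subseteq> S"
    and D: "\<forall>x\<in>S. \<forall>y\<in>S. dist x y \<le> D" and L: "L \<ge> 0"
    and lip: "\<forall>x\<in>S. \<forall>y\<in>S. \<bar>f x - f y\<bar> \<le> L * dist x y"
    and H: "(SUP a\<in>A. INF b\<in>B. dist a b) \<le> H"
  shows "Sup (f ` A) \<le> Sup (f ` B) + L * H"
proof -
  obtain b0 where b0: "b0 \<in> B" using B by auto
  have bddB: "bdd_above (f ` B)"
  proof -
    have "\<forall>b\<in>B. f b \<le> f b0 + L * D"
    proof
      fix b assume b: "b \<in> B"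
      have "\<bar>f b - f b0\<bar> \<le> L * dist b b0" using lip b b0 BS by auto
      moreover have "L * dist b b0 \<le> L * D" using D b b0 BS L by (auto intro!: mult_left_mono)
      ultimately show "f b \<le> f b0 + L * D" by linarith
    qed
    thus ?thesis by (auto simp: bdd_above_def)
  qed
  have bddI: "bdd_below ((\<lambda>b. dist a b) ` B)" for a by (rule bdd_belowI[of _ 0]) auto
  have bddS: "bdd_above ((\<lambda>a. INF b\<in>B. dist a b) ` A)"
  proof -
    have "\<forall>a\<in>A. (INF b\<in>B. dist a b) \<le> D"
    proof
      fix a assume a: "a \<in> A"
      have "(INF b\<in>B. dist a b) \<le> dist a b0" by (rule cINF_lower[OF bddI b0])
      also have "\<dots> \<le> D" using D a b0 AS BS by auto
      finally show "(INF b\<in>B. dist a b) \<le> D" .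
    qed
    thus ?thesis by (auto simp: bdd_above_def)
  qed
  show ?thesis
  proof (rule cSUP_least[OF A])
    fix a assume a: "a \<in> A"
    have aH: "(INF b\<in>B. dist a b) \<le> H" using cSUP_upper[OF a bddS] H by linarith
    show "f a \<le> Sup (f ` B) + L * H"
    proof (rule field_le_epsilon)
      fix e :: real assume e: "0 < e"
      define \<eta> where "\<eta> = e / (L + 1)"
      have \<eta>: "\<eta> > 0" using e L by (simp add: \<eta>_def)
      have L\<eta>: "L * \<eta> \<le> e"
      proof -
        have "L * \<eta> = e * (L / (L + 1))" by (simp add: \<eta>_def)
        also have "\<dots> \<le> e * 1" using e L by (intro mult_left_mono) auto
        finally show ?thesis by simp
      qed
      have "(INF b\<in>B. dist a b) < H + \<eta>" using aH \<eta> by linarith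
      then obtain b where b: "b \<in> B" and db: "dist a b < H + \<eta>"
        using cINF_less_iff[OF B bddI] by blast
      have "\<bar>f a - f b\<bar> \<le> L * dist a b" using lip a b AS BS by auto
      moreover have "L * dist a b \<le> L * (H + \<eta>)" using db L by (intro mult_left_mono) auto
      moreover have "f b \<le> Sup (f ` B)" using cSUP_upper[OF b bddB] .
      ultimately show "f a \<le> Sup (f ` B) + L * H + e" using L\<eta> by (simp add: algebra_simps)
    qed
  qed
qed

lemma haus_sup:
  fixes f :: "'p::metric_space \<Rightarrow> real"
  assumes A: "A \<noteq> {}" and B: "B \<noteq> {}" and AS: "A \<subseteq> S" and BS: "B \<subseteq> S"
    and S: "bounded S" and L: "L \<ge> 0"
    and lip: "\<forall>x\<in>S. \<forall>y\<in>S. \<bar>f x - f y\<bar> \<le> L * dist x y"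
  shows "\<bar>Sup (f ` A) - Sup (f ` B)\<bar> \<le> L * hdist dist A B"
proof -
  obtain D where D: "\<forall>x\<in>S. \<forall>y\<in>S. dist x y \<le> D" using S bounded_two_points by blast
  have 1: "Sup (f ` A) \<le> Sup (f ` B) + L * hdist dist A B"
    by (rule haus_one[OF A B AS BS D L lip]) (simp add: hdist_def)
  have 2: "Sup (f ` B) \<le> Sup (f ` A) + L * hdist dist A B"
    by (rule haus_one[OF B A BS AS D L lip]) (simp add: hdist_def dist_commute)
  show ?thesis using 1 2 by linarith
qed

lemma lip_bdd:
  fixes f :: "'p::metric_space \<Rightarrow> real"
  assumes AS: "A \<subseteq> S" and S: "bounded S" and L: "L \<ge> 0"
    and lip: "\<forall>x\<in>S. \<forall>y\<in>S. \<bar>f x - f y\<bar> \<le> L * dist x y"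
  shows "bdd_above (f ` A)"
proof (cases "A = {}")
  case True thus ?thesis by simp
next
  case False
  then obtain a0 where a0: "a0 \<in> A" by auto
  obtain D where D: "\<forall>x\<in>S. \<forall>y\<in>S. dist x y \<le> D" using S bounded_two_points by blast
  have "\<forall>b\<in>A. f b \<le> f a0 + L * D"
  proof
    fix b assume b: "b \<in> A"
    have "\<bar>f b - f a0\<bar> \<le> L * dist b a0" using lip b a0 AS by auto
    moreover have "L * dist b a0 \<le> L * D" using D b a0 AS L by (auto intro!: mult_left_mono)
    ultimately show "f b \<le> f a0 + L * D" by linarith
  qed
  thus ?thesis by (auto simp: bdd_above_def)
qed

lemma Mnext_sub:
  assumes m: "m \<in> Mset h Wr Ur t" and u: "u \<in> Ur t" and w: "w \<in> Wr (Suc t)"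
  shows "Mnext h Wr t m u \<subseteq> Mset h Wr Ur (Suc t)"
proof
  fix m' assume "m' \<in> Mnext h Wr t m u"
  then obtain ws where ws: "ws \<in> Wm h Wr t m"
    and m': "m' = (fst m @ [h (Suc t) (ws, snd m @ [u])], snd m @ [u])"
    by (auto simp: Mnext_def Yset_def)
  obtain ys us where mys: "m = (ys, us)" by (cases m)
  have ly: "length ys = Suc t" and us: "us \<in> ProdL Ur t" using m mys by (auto simp: Mset_def)
  have wsP: "ws \<in> ProdL Wr (Suc t)" and y0: "ys ! 0 = h 0 ([ws ! 0], [])"
    and yl: "\<forall>l\<in>{1..t}. ys ! l = h l (take l ws, take l us)"
    using ws mys by (auto simp: Wm_def)
  have lws: "length ws = Suc t" using wsP by (simp add: ProdL_def)
  have lus: "length us = t" using us by (simp add: ProdL_def)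
  define ys' where "ys' = ys @ [h (Suc t) (ws, us @ [u])]"
  define us' where "us' = us @ [u]"
  define ws' where "ws' = ws @ [w]"
  have c1: "ws' \<in> ProdL Wr (Suc (Suc t))"
    using wsP w lws by (auto simp: ProdL_def nth_append less_Suc_eq ws'_def)
  have c2: "ys' ! 0 = h 0 ([ws' ! 0], [])" using y0 ly lws by (simp add: nth_append ys'_def ws'_def)
  have c3: "\<forall>l\<in>{1..Suc t}. ys' ! l = h l (take l ws', take l us')"
  proof
    fix l assume l: "l \<in> {1..Suc t}"
    show "ys' ! l = h l (take l ws', take l us')"
    proof (cases "l = Suc t")
      case True thus ?thesis using ly lws lus by (simp add: nth_append ys'_def ws'_def us'_def)
    next
      case False
      hence "l \<in> {1..t}" using l by auto
      thus ?thesis using yl ly lws lus by (simp add: nth_append ys'_def ws'_def us'_def)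
    qed
  qed
  have "ws' \<in> Wm h Wr (Suc t) (ys', us')" using c1 c2 c3 by (simp add: Wm_def)
  moreover have "us' \<in> ProdL Ur (Suc t)"
    using us u lus by (auto simp: ProdL_def nth_append less_Suc_eq us'_def)
  moreover have "length ys' = Suc (Suc t)" using ly by (simp add: ys'_def)
  moreover have "m' = (ys', us')" using m' mys by (simp add: ys'_def us'_def)
  ultimately show "m' \<in> Mset h Wr Ur (Suc t)" by (auto simp: Mset_def)
qed

lemma Mset_Msp:
  assumes tT: "t \<le> T" and Wsub: "\<forall>i\<le>T. Wr i \<subseteq> Wsp i" and Usub: "\<forall>i\<le>T. Ur i \<subseteq> Usp i"
    and hm: "\<forall>t\<le>Suc T. \<forall>x\<in>hdom Wsp Usp t. h t x \<in> Ysp t"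
  shows "Mset h Wr Ur t \<subseteq> Msp Ysp Usp t"
proof
  fix m assume m: "m \<in> Mset h Wr Ur t"
  obtain ys us where mys: "m = (ys, us)" by (cases m)
  have ly: "length ys = Suc t" and us: "us \<in> ProdL Ur t" and ne: "Wm h Wr t (ys, us) \<noteq> {}"
    using m mys by (auto simp: Mset_def)
  then obtain ws where ws: "ws \<in> Wm h Wr t (ys, us)" by auto
  have wsP: "ws \<in> ProdL Wr (Suc t)" and y0: "ys ! 0 = h 0 ([ws ! 0], [])"
    and yl: "\<forall>l\<in>{1..t}. ys ! l = h l (take l ws, take l us)"
    using ws by (auto simp: Wm_def)
  have lws: "length ws = Suc t" using wsP by (simp add: ProdL_def)
  have lus: "length us = t" using us by (simp add: ProdL_def)
  have usP: "us \<in> ProdL Usp t"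
  proof -
    have "us ! i \<in> Usp i" if i: "i < t" for i
    proof -
      have iT: "i \<le> T" using tT i by simp
      have "us ! i \<in> Ur i" using us i by (simp add: ProdL_def)
      thus ?thesis using Usub iT by blast
    qed
    thus ?thesis using lus by (simp add: ProdL_def)
  qed
  have "ys ! i \<in> Ysp i" if i: "i < Suc t" for i
  proof (cases "i = 0")
    case True
    have "ws ! 0 \<in> Wsp 0" using wsP Wsub by (force simp: ProdL_def)
    hence "([ws ! 0], []) \<in> hdom Wsp Usp 0" by (simp add: hdom_def ProdL_def)
    thus ?thesis using hm y0 True by auto
  next
    case False
    hence il: "i \<in> {1..t}" using i by auto
    have "take i ws \<in> ProdL Wsp i"
    proof -
      have "ws ! j \<in> Wsp j" if j: "j < i" for j
      proof -
        have jT: "j \<le> T" and jt: "j < Suc t" using tT il j by auto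
        have "ws ! j \<in> Wr j" using wsP jt by (simp add: ProdL_def)
        thus ?thesis using Wsub jT by blast
      qed
      thus ?thesis using lws il by (simp add: ProdL_def)
    qed
    moreover have "take i us \<in> ProdL Usp i" using usP lus il by (force simp: ProdL_def)
    ultimately have "(take i ws, take i us) \<in> hdom Wsp Usp i" using False by (simp add: hdom_def)
    moreover have "i \<le> Suc T" using il tT by auto
    ultimately show ?thesis using hm yl il by auto
  qed
  hence "ys \<in> ProdL Ysp (Suc t)" using ly by (simp add: ProdL_def)
  thus "m \<in> Msp Ysp Usp t" using usP mys by (simp add: Msp_def)
qed

theorem theorem4:
  fixes T :: nat
    and \<Omega> :: "'o set"
    and Wv :: "nat \<Rightarrow> 'o \<Rightarrow> 'a::metric_space"
    and Wsp Usp Ysp Ur :: "nat \<Rightarrow> 'a set"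
    and Csp :: "nat \<Rightarrow> real set"
    and h :: "nat \<Rightarrow> 'a mem \<Rightarrow> 'a"
    and d :: "nat \<Rightarrow> 'a mem \<Rightarrow> real"
    and \<sigma> :: "nat \<Rightarrow> 'a mem \<Rightarrow> 'p::metric_space"
    and Psp :: "nat \<Rightarrow> 'p set"
    and \<epsilon> \<delta> lam :: "nat \<Rightarrow> real"
    and Q :: "nat \<Rightarrow> 'a mem \<Rightarrow> 'a \<Rightarrow> real"
    and V :: "nat \<Rightarrow> 'a mem \<Rightarrow> real"
    and Qh :: "nat \<Rightarrow> 'p \<Rightarrow> 'a \<Rightarrow> real"
    and Vh :: "nat \<Rightarrow> 'p \<Rightarrow> real"
    and gh :: "nat \<Rightarrow> 'p \<Rightarrow> 'a"
    and \<Theta> :: "nat \<Rightarrow> 'a mem \<Rightarrow> 'a \<Rightarrow> real"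
    and \<Lambda> :: "nat \<Rightarrow> 'a mem \<Rightarrow> real"
    and LV :: "nat \<Rightarrow> real"
    and \<alpha> :: "nat \<Rightarrow> real"
  defines "Wr \<equiv> (\<lambda>l. Wv l ` \<Omega>)"
  assumes indep: "(\<lambda>\<omega>. restrict (\<lambda>l. Wv l \<omega>) {..T}) ` \<Omega> = PiE {..T} Wr"
    and W_in: "\<forall>l\<le>T. \<forall>\<omega>\<in>\<Omega>. Wv l \<omega> \<in> Wsp l"
    and Ur_sub: "\<forall>t\<le>T. Ur t \<subseteq> Usp t"
    and bdd_WU: "\<forall>t\<le>T. bounded (Wsp t) \<and> bounded (Usp t)"
    and bdd_Y: "\<forall>t\<le>Suc T. bounded (Ysp t)"
    and bdd_C: "\<forall>t\<le>T. bounded (Csp t) \<and> Csp t \<subseteq> {0..}"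
    and h_maps: "\<forall>t\<le>Suc T. \<forall>x\<in>hdom Wsp Usp t. h t x \<in> Ysp t"
    and h_lip: "\<forall>t\<le>Suc T. lipschitz_wrt pdist dist (hdom Wsp Usp t) (h t)"
    and h_inv: "\<forall>t\<le>Suc T. L_invertible pdist dist (hdom Wsp Usp t) (h t)"
    and d_maps: "\<forall>t\<le>T. \<forall>x\<in>hdom Wsp Usp (Suc t). d t x \<in> Csp t"
    and d_lip: "\<forall>t\<le>T. lipschitz_wrt pdist dist (hdom Wsp Usp (Suc t)) (d t)"
    \<comment> \<open>approximate information state\<close>
    and \<sigma>_maps: "\<forall>t\<le>T. \<forall>m\<in>Msp Ysp Usp t. \<sigma> t m \<in> Psp t"
    and bdd_P: "\<forall>t\<le>T. bounded (Psp t)"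
    and \<sigma>_inv: "\<forall>t\<le>T. L_invertible pdist dist (Msp Ysp Usp t) (\<sigma> t)"
    and params_nonneg: "\<forall>t\<le>T. \<epsilon> t \<ge> 0 \<and> \<delta> t \<ge> 0 \<and> lam t \<ge> 0"
    and ais1: "\<forall>t\<le>T. \<forall>m\<in>Mset h Wr Ur t. \<forall>u\<in>Ur t.
        \<bar>Sup (Cset h Wr d t m u) - Sup (CsetP h Wr Ur d \<sigma> t (\<sigma> t m) u)\<bar> \<le> \<epsilon> t"
    and ais2: "\<forall>t\<le>T. \<forall>m\<in>Mset h Wr Ur t. \<forall>u\<in>Ur t.
        hdist dist (PiNext h Wr \<sigma> t m u) (PiNextP h Wr Ur \<sigma> t (\<sigma> t m) u) \<le> \<delta> t"
    and ais3: "\<forall>t\<le>T. \<forall>p1\<in>PiR h Wr Ur \<sigma> t. \<forall>p2\<in>PiR h Wr Ur \<sigma> t. \<forall>u\<in>Ur t.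
        hdist dist (PiNextP h Wr Ur \<sigma> t p1 u) (PiNextP h Wr Ur \<sigma> t p2 u) \<le> lam t * dist p1 p2"
    \<comment> \<open>memory-based dynamic program\<close>
    and V_end: "\<forall>m. V (Suc T) m = 0"
    and Q_def: "\<forall>t\<le>T. \<forall>m\<in>Mset h Wr Ur t. \<forall>u\<in>Ur t.
        Q t m u = max (Sup (Cset h Wr d t m u)) (SUP m'\<in>Mnext h Wr t m u. V (Suc t) m')"
    and V_def: "\<forall>t\<le>T. \<forall>m\<in>Mset h Wr Ur t. V t m = (INF u\<in>Ur t. Q t m u)"
    \<comment> \<open>approximate dynamic program\<close>
    and Vh_end: "\<forall>p. Vh (Suc T) p = 0"
    and Qh_def: "\<forall>t\<le>T. \<forall>p\<in>PiR h Wr Ur \<sigma> t. \<forall>u\<in>Ur t.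
        Qh t p u = max (Sup (CsetP h Wr Ur d \<sigma> t p u)) (SUP p'\<in>PiNextP h Wr Ur \<sigma> t p u. Vh (Suc t) p')"
    and Vh_def: "\<forall>t\<le>T. \<forall>p\<in>PiR h Wr Ur \<sigma> t. Vh t p = (INF u\<in>Ur t. Qh t p u)"
    \<comment> \<open>infimum attained; gh selects a minimiser\<close>
    and attained: "\<forall>t\<le>T. \<forall>p\<in>PiR h Wr Ur \<sigma> t. \<exists>u\<in>Ur t. Qh t p u = Vh t p"
    and gh_argmin: "\<forall>t\<le>T. \<forall>p\<in>PiR h Wr Ur \<sigma> t.
        gh t p \<in> Ur t \<and> (\<forall>u\<in>Ur t. Qh t p (gh t p) \<le> Qh t p u)"
    \<comment> \<open>value of the approximate strategy g^ap_t(m) = gh t (\<sigma> t m)\<close>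
    and \<Lambda>_end: "\<forall>m. \<Lambda> (Suc T) m = 0"
    and \<Theta>_def: "\<forall>t\<le>T. \<forall>m\<in>Mset h Wr Ur t. \<forall>u\<in>Ur t.
        \<Theta> t m u = max (Sup (Cset h Wr d t m u)) (SUP m'\<in>Mnext h Wr t m u. \<Lambda> (Suc t) m')"
    and \<Lambda>_def: "\<forall>t\<le>T. \<forall>m\<in>Mset h Wr Ur t. \<Lambda> t m = \<Theta> t m (gh t (\<sigma> t m))"
    \<comment> \<open>Lipschitz constants of Vh_{t+1} and the alphas\<close>
    and LV_lip: "\<forall>t<T. LV (Suc t) \<ge> 0 \<and> (\<forall>p1\<in>PiR h Wr Ur \<sigma> (Suc t). \<forall>p2\<in>PiR h Wr Ur \<sigma> (Suc t).
        \<bar>Vh (Suc t) p1 - Vh (Suc t) p2\<bar> \<le> LV (Suc t) * dist p1 p2)"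
    and LV_end: "LV (Suc T) = 0"
    and \<alpha>_end: "\<alpha> (Suc T) = 0"
    and \<alpha>_def: "\<forall>t\<le>T. \<alpha> t = max (\<epsilon> t) (\<alpha> (Suc t) + LV (Suc t) * \<delta> t)"
  shows "\<forall>t\<le>T. \<forall>m\<in>Mset h Wr Ur t. \<forall>u\<in>Ur t.
           \<bar>Q t m u - \<Theta> t m u\<bar> \<le> 2 * \<alpha> t \<and> \<bar>V t m - \<Lambda> t m\<bar> \<le> 2 * \<alpha> t"
proof -
  have Wr_sub: "\<forall>i\<le>T. Wr i \<subseteq> Wsp i" using W_in by (auto simp: Wr_def)
  have Wr_ne: "Wr i \<noteq> {}" if m: "m \<in> Mset h Wr Ur t" for i m t
  proof -
    obtain ys us where mys: "m = (ys, us)" by (cases m)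
    obtain ws where ws: "ws \<in> Wm h Wr t (ys, us)" using m mys by (auto simp: Mset_def)
    hence "ws ! 0 \<in> Wr 0" by (auto simp: Wm_def ProdL_def)
    hence "\<Omega> \<noteq> {}" by (auto simp: Wr_def)
    thus ?thesis by (simp add: Wr_def)
  qed
  have Mnext_ne: "Mnext h Wr t m u \<noteq> {}" if m: "m \<in> Mset h Wr Ur t" for t m u
    using m by (cases m) (auto simp: Mset_def Mnext_def Yset_def)
  have Mnext_Mset: "Mnext h Wr t m u \<subseteq> Mset h Wr Ur (Suc t)" if m: "m \<in> Mset h Wr Ur t" and u: "u \<in> Ur t" for t m u
  proof -
    obtain w where "w \<in> Wr (Suc t)" using Wr_ne[OF m] by blast
    thus ?thesis using Mnext_sub[OF m u] by blast
  qed
  define P where "P n \<longleftrightarrow> (\<forall>m\<in>Mset h Wr Ur n. \<bar>V n m - Vh n (\<sigma> n m)\<bar> \<le> \<alpha> n \<and> \<bar>\<Lambda> n m - Vh n (\<sigma> n m)\<bar> \<le> \<alpha> n)" for n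
  define R where "R n \<longleftrightarrow> (\<forall>m\<in>Mset h Wr Ur n. \<forall>u\<in>Ur n. \<bar>Q n m u - Qh n (\<sigma> n m) u\<bar> \<le> \<alpha> n \<and> \<bar>\<Theta> n m u - Qh n (\<sigma> n m) u\<bar> \<le> \<alpha> n)" for n
  have PT: "P (Suc T)"
    unfolding P_def by (simp add: V_end[rule_format] Vh_end[rule_format] \<Lambda>_end[rule_format] \<alpha>_end)
  have step_R: "R n" if nT: "n \<le> T" and Pn: "P (Suc n)" for n
    unfolding R_def
  proof (intro ballI)
    fix m u assume m: "m \<in> Mset h Wr Ur n" and u: "u \<in> Ur n"
    define p where "p = \<sigma> n m"
    have pR: "p \<in> PiR h Wr Ur \<sigma> n" using m by (simp add: PiR_def p_def)
    have mp: "m \<in> MofPi h Wr Ur \<sigma> n p" using m by (simp add: MofPi_def p_def)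
    have Qe: "Q n m u = max (Sup (Cset h Wr d n m u)) (SUP m'\<in>Mnext h Wr n m u. V (Suc n) m')"
      using Q_def nT m u by blast
    have Te: "\<Theta> n m u = max (Sup (Cset h Wr d n m u)) (SUP m'\<in>Mnext h Wr n m u. \<Lambda> (Suc n) m')"
      using \<Theta>_def nT m u by blast
    have Qhe: "Qh n p u = max (Sup (CsetP h Wr Ur d \<sigma> n p u)) (SUP p'\<in>PiNextP h Wr Ur \<sigma> n p u. Vh (Suc n) p')"
      using Qh_def nT pR u by blast
    have c: "\<bar>Sup (Cset h Wr d n m u) - Sup (CsetP h Wr Ur d \<sigma> n p u)\<bar> \<le> \<epsilon> n"
      using ais1 nT m u by (auto simp: p_def)
    have MN: "Mnext h Wr n m u \<subseteq> Mset h Wr Ur (Suc n)" by (rule Mnext_Mset[OF m u])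
    have MNne: "Mnext h Wr n m u \<noteq> {}" by (rule Mnext_ne[OF m])
    have PNne: "PiNextP h Wr Ur \<sigma> n p u \<noteq> {}"
      using mp MNne by (auto simp: PiNextP_def PiNext_def)
    have key: "\<bar>Sup (F ` Mnext h Wr n m u) - Sup (Vh (Suc n) ` PiNextP h Wr Ur \<sigma> n p u)\<bar>
                 \<le> \<alpha> (Suc n) + LV (Suc n) * \<delta> n"
      if F: "\<forall>m'\<in>Mset h Wr Ur (Suc n). \<bar>F m' - Vh (Suc n) (\<sigma> (Suc n) m')\<bar> \<le> \<alpha> (Suc n)" for F
    proof (cases "n = T")
      case True
      have "F ` Mnext h Wr n m u = {0}"
      proof -
        have "\<forall>m'\<in>Mnext h Wr n m u. F m' = 0"
          using F MN True Vh_end \<alpha>_end by fastforce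
        thus ?thesis using MNne by auto
      qed
      moreover have "Vh (Suc n) ` PiNextP h Wr Ur \<sigma> n p u = {0}"
        using PNne True Vh_end by auto
      ultimately show ?thesis using True \<alpha>_end LV_end by simp
    next
      case False
      hence nT': "n < T" using nT by simp
      define A where "A = PiNext h Wr \<sigma> n m u"
      define B where "B = PiNextP h Wr Ur \<sigma> n p u"
      define S where "S = PiR h Wr Ur \<sigma> (Suc n)"
      have AS: "A \<subseteq> S" using MN by (auto simp: A_def S_def PiNext_def PiR_def)
      have BS: "B \<subseteq> S"
      proof
        fix x assume "x \<in> B"
        then obtain m'' where m'': "m'' \<in> MofPi h Wr Ur \<sigma> n p" and x: "x \<in> \<sigma> (Suc n) ` Mnext h Wr n m'' u"
          by (auto simp: B_def PiNextP_def PiNext_def)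
        have "m'' \<in> Mset h Wr Ur n" using m'' by (simp add: MofPi_def)
        thus "x \<in> S" using Mnext_Mset[of m'' n u] u x by (auto simp: S_def PiR_def)
      qed
      have Ane: "A \<noteq> {}" using MNne by (simp add: A_def PiNext_def)
      have Bne: "B \<noteq> {}" using PNne by (simp add: B_def)
      have SnT: "Suc n \<le> T" using nT' by simp
      have Sb: "bounded S"
      proof -
        have "Mset h Wr Ur (Suc n) \<subseteq> Msp Ysp Usp (Suc n)"
          by (rule Mset_Msp[OF SnT Wr_sub]) (use Ur_sub h_maps in auto)
        hence "S \<subseteq> Psp (Suc n)" using \<sigma>_maps SnT by (auto simp: S_def PiR_def)
        thus ?thesis using bdd_P SnT bounded_subset by blast
      qed
      have L: "LV (Suc n) \<ge> 0" and lip: "\<forall>x\<in>S. \<forall>y\<in>S. \<bar>Vh (Suc n) x - Vh (Suc n) y\<bar> \<le> LV (Suc n) * dist x y"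
        using LV_lip nT' by (auto simp: S_def)
      have h1: "\<bar>Sup (Vh (Suc n) ` A) - Sup (Vh (Suc n) ` B)\<bar> \<le> LV (Suc n) * hdist dist A B"
        by (rule haus_sup[OF Ane Bne AS BS Sb L lip])
      have "hdist dist A B \<le> \<delta> n" using ais2 nT m u by (auto simp: A_def B_def p_def)
      hence h2: "LV (Suc n) * hdist dist A B \<le> LV (Suc n) * \<delta> n" using L by (rule mult_left_mono)
      have AV: "Vh (Suc n) ` A = (\<lambda>m'. Vh (Suc n) (\<sigma> (Suc n) m')) ` Mnext h Wr n m u"
        by (auto simp: A_def PiNext_def)
      have bddA: "bdd_above (Vh (Suc n) ` A)" by (rule lip_bdd[OF AS Sb L lip])
      have h3: "\<bar>Sup (F ` Mnext h Wr n m u) - Sup ((\<lambda>m'. Vh (Suc n) (\<sigma> (Suc n) m')) ` Mnext h Wr n m u)\<bar> \<le> \<alpha> (Suc n)"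
        by (rule sup_close[OF MNne]) (use F MN bddA AV in auto)
      show ?thesis using h1 h2 h3 AV unfolding B_def AV by linarith
    qed
    have PV: "\<forall>m'\<in>Mset h Wr Ur (Suc n). \<bar>V (Suc n) m' - Vh (Suc n) (\<sigma> (Suc n) m')\<bar> \<le> \<alpha> (Suc n)"
      using Pn by (simp add: P_def)
    have PL: "\<forall>m'\<in>Mset h Wr Ur (Suc n). \<bar>\<Lambda> (Suc n) m' - Vh (Suc n) (\<sigma> (Suc n) m')\<bar> \<le> \<alpha> (Suc n)"
      using Pn by (simp add: P_def)
    have al: "\<alpha> n = max (\<epsilon> n) (\<alpha> (Suc n) + LV (Suc n) * \<delta> n)" using \<alpha>_def nT by blast
    have e_le: "\<epsilon> n \<le> \<alpha> n" using al by simp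
    have k_le: "\<alpha> (Suc n) + LV (Suc n) * \<delta> n \<le> \<alpha> n" using al by simp
    have c': "\<bar>Sup (Cset h Wr d n m u) - Sup (CsetP h Wr Ur d \<sigma> n p u)\<bar> \<le> \<alpha> n"
      using c e_le by (rule order_trans)
    have "\<bar>Q n m u - Qh n p u\<bar> \<le> \<alpha> n"
      unfolding Qe Qhe by (rule max_close[OF c' order_trans[OF key[OF PV] k_le]])
    moreover have "\<bar>\<Theta> n m u - Qh n p u\<bar> \<le> \<alpha> n"
      unfolding Te Qhe by (rule max_close[OF c' order_trans[OF key[OF PL] k_le]])
    ultimately show "\<bar>Q n m u - Qh n (\<sigma> n m) u\<bar> \<le> \<alpha> n \<and> \<bar>\<Theta> n m u - Qh n (\<sigma> n m) u\<bar> \<le> \<alpha> n"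
      by (simp add: p_def)
  qed
  have step_P: "P n" if nT: "n \<le> T" and Rn: "R n" for n
    unfolding P_def
  proof (intro ballI)
    fix m assume m: "m \<in> Mset h Wr Ur n"
    define p where "p = \<sigma> n m"
    have pR: "p \<in> PiR h Wr Ur \<sigma> n" using m by (simp add: PiR_def p_def)
    have g: "gh n p \<in> Ur n" and gmin: "\<forall>u\<in>Ur n. Qh n p (gh n p) \<le> Qh n p u"
      using gh_argmin nT pR by auto
    have Ve: "V n m = (INF u\<in>Ur n. Q n m u)" using V_def nT m by blast
    have Vhe: "Vh n p = (INF u\<in>Ur n. Qh n p u)" using Vh_def nT pR by blast
    have cl: "\<forall>u\<in>Ur n. \<bar>Q n m u - Qh n p u\<bar> \<le> \<alpha> n" using Rn m by (simp add: R_def p_def)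
    have 1: "\<bar>V n m - Vh n p\<bar> \<le> \<alpha> n"
      using inf_close[OF g gmin cl] Ve Vhe by simp
    have Vhg: "Vh n p = Qh n p (gh n p)"
      unfolding Vhe by (rule cInf_eq_minimum) (use g gmin in auto)
    have Le: "\<Lambda> n m = \<Theta> n m (gh n p)" using \<Lambda>_def nT m by (simp add: p_def)
    have "\<bar>\<Theta> n m (gh n p) - Qh n p (gh n p)\<bar> \<le> \<alpha> n" using Rn m g by (simp add: R_def p_def)
    hence 2: "\<bar>\<Lambda> n m - Vh n p\<bar> \<le> \<alpha> n" using Le Vhg by simp
    show "\<bar>V n m - Vh n (\<sigma> n m)\<bar> \<le> \<alpha> n \<and> \<bar>\<Lambda> n m - Vh n (\<sigma> n m)\<bar> \<le> \<alpha> n"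
      using 1 2 by (simp add: p_def)
  qed
  have Pall: "P n" if "n \<le> Suc T" for n
    using that
  proof (induction n rule: inc_induct)
    case base show ?case by (rule PT)
  next
    case (step n)
    hence "n \<le> T" by simp
    thus ?case using step_P step_R step.IH by blast
  qed
  show ?thesis
  proof (intro allI impI ballI)
    fix t m u assume tT: "t \<le> T" and m: "m \<in> Mset h Wr Ur t" and u: "u \<in> Ur t"
    have Rt: "R t" using step_R[OF tT Pall] tT by simp
    have Pt: "P t" using Pall tT by simp
    have "\<bar>Q t m u - Qh t (\<sigma> t m) u\<bar> \<le> \<alpha> t" "\<bar>\<Theta> t m u - Qh t (\<sigma> t m) u\<bar> \<le> \<alpha> t"
      using Rt m u by (auto simp: R_def)
    moreover have "\<bar>V t m - Vh t (\<sigma> t m)\<bar> \<le> \<alpha> t" "\<bar>\<Lambda> t m - Vh t (\<sigma> t m)\<bar> \<le> \<alpha> t"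
      using Pt m by (auto simp: P_def)
    ultimately show "\<bar>Q t m u - \<Theta> t m u\<bar> \<le> 2 * \<alpha> t \<and> \<bar>V t m - \<Lambda> t m\<bar> \<le> 2 * \<alpha> t"
      by linarith
  qed
qed

end
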